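(* Let $A\bowtie^{\theta} I$ be an amalgamated Banach algebra as in the context, and assume $A\bowtie^{\theta} I$ is commutative. Then $A\bowtie^{\theta} I$ is weakly amenable if and only if both $A$ and $I$ are weakly amenable.
   Context: Let $A$ and $B$ be Banach algebras, $\theta:A\to B$ a continuous algebra homomorphism with $\|\theta\|\le 1$, and $I$ a closed two-sided ideal of $B$. The amalgamated Banach algebra $A\bowtie^{\theta} I$ is the Banach space $\{(a,i): a\in A,\ i\in I\}$ with norm $\|(a,i)\|=\|a\|+\|i\|$ and product $(a,i)\cdot(a',i')=(aa',\ \theta(a)i'+i\theta(a')+ii')$. A Banach algebra $C$ is weakly amenable if every bounded derivation $D:C\to C^*$ (i.e. bounded linear with $D(ab)=a\cdot D(b)+D(a)\cdot b$, where $\langle a\cdot f,b\rangle=f(ba)$, $\langle f\cdot a,b\rangle=f(ab)$) is inner, i.e. of the form $D(a)=a\cdot f-f\cdot a$ for some $f\in C^*$. *)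

theory Defs
  imports "HOL-Analysis.Analysis"
begin

text \<open>A (real) Banach algebra presented concretely: carrier set together with its
  operations.  This lets us treat the closed ideal I (with the induced structure)
  and the amalgamated algebra (with the l1-norm and twisted product) uniformly.\<close>

record 'a balg =
  bcarrier :: "'a set"
  badd :: "'a \<Rightarrow> 'a \<Rightarrow> 'a"
  bscale :: "real \<Rightarrow> 'a \<Rightarrow> 'a"
  bmul :: "'a \<Rightarrow> 'a \<Rightarrow> 'a"
  bnorm :: "'a \<Rightarrow> real"

text \<open>Elements of the dual C^*: bounded linear functionals on the carrier
  (values outside the carrier are irrelevant).\<close>
definition dual_elem :: "'a balg \<Rightarrow> ('a \<Rightarrow> real) \<Rightarrow> bool" where
  "dual_elem C f \<longleftrightarrow>
     (\<forall>x\<in>bcarrier C. \<forall>y\<in>bcarrier C. f (badd C x y) = f x + f y) \<and>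
     (\<forall>r. \<forall>x\<in>bcarrier C. f (bscale C r x) = r * f x) \<and>
     (\<exists>K. \<forall>x\<in>bcarrier C. \<bar>f x\<bar> \<le> K * bnorm C x)"

text \<open>Bounded derivations D : C \<rightarrow> C^*, with \<open>\<langle>a\<cdot>f,b\<rangle> = f(ba)\<close> and
  \<open>\<langle>f\<cdot>a,b\<rangle> = f(ab)\<close>; here \<open>D a c\<close> stands for \<open>\<langle>D(a), c\<rangle>\<close>.\<close>
definition bderivation :: "'a balg \<Rightarrow> ('a \<Rightarrow> 'a \<Rightarrow> real) \<Rightarrow> bool" where
  "bderivation C D \<longleftrightarrow>
     (\<forall>a\<in>bcarrier C. dual_elem C (D a)) \<and>
     (\<forall>a\<in>bcarrier C. \<forall>a'\<in>bcarrier C. \<forall>c\<in>bcarrier C.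
        D (badd C a a') c = D a c + D a' c) \<and>
     (\<forall>r. \<forall>a\<in>bcarrier C. \<forall>c\<in>bcarrier C. D (bscale C r a) c = r * D a c) \<and>
     (\<exists>K. \<forall>a\<in>bcarrier C. \<forall>c\<in>bcarrier C. \<bar>D a c\<bar> \<le> K * bnorm C a * bnorm C c) \<and>
     (\<forall>a\<in>bcarrier C. \<forall>b\<in>bcarrier C. \<forall>c\<in>bcarrier C.
        D (bmul C a b) c = D b (bmul C c a) + D a (bmul C b c))"

definition inner_derivation :: "'a balg \<Rightarrow> ('a \<Rightarrow> 'a \<Rightarrow> real) \<Rightarrow> bool" where
  "inner_derivation C D \<longleftrightarrow>
     (\<exists>f. dual_elem C f \<and>
        (\<forall>a\<in>bcarrier C. \<forall>c\<in>bcarrier C. D a c = f (bmul C c a) - f (bmul C a c)))"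

definition weakly_amenable :: "'a balg \<Rightarrow> bool" where
  "weakly_amenable C \<longleftrightarrow> (\<forall>D. bderivation C D \<longrightarrow> inner_derivation C D)"

text \<open>The Banach algebra structure of a subset S of a normed algebra type
  (S = UNIV gives the algebra itself; S = I gives the ideal I).\<close>
definition sub_balg :: "'a::real_normed_algebra set \<Rightarrow> 'a balg" where
  "sub_balg S = \<lparr>bcarrier = S, badd = (+), bscale = scaleR, bmul = (*), bnorm = norm\<rparr>"

definition amalg :: "('a::real_normed_algebra \<Rightarrow> 'b::real_normed_algebra) \<Rightarrow> 'b set
    \<Rightarrow> ('a \<times> 'b) balg" where
  "amalg \<theta> I = \<lparr>bcarrier = UNIV \<times> I,
     badd = (\<lambda>(a,i) (a',i'). (a + a', i + i')),
     bscale = (\<lambda>r (a,i). (r *\<^sub>R a, r *\<^sub>R i)),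
     bmul = (\<lambda>(a,i) (a',i'). (a * a', \<theta> a * i' + i * \<theta> a' + i * i')),
     bnorm = (\<lambda>(a,i). norm a + norm i)\<rparr>"

definition closed_two_sided_ideal :: "'b::real_normed_algebra set \<Rightarrow> bool" where
  "closed_two_sided_ideal I \<longleftrightarrow> closed I \<and> 0 \<in> I \<and>
     (\<forall>x\<in>I. \<forall>y\<in>I. x + y \<in> I) \<and> (\<forall>r. \<forall>x\<in>I. r *\<^sub>R x \<in> I) \<and>
     (\<forall>b. \<forall>x\<in>I. b * x \<in> I \<and> x * b \<in> I)"

definition balg_commutative :: "'a balg \<Rightarrow> bool" where
  "balg_commutative C \<longleftrightarrow> (\<forall>x\<in>bcarrier C. \<forall>y\<in>bcarrier C. bmul C x y = bmul C y x)"

end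

theory Submission
  imports Defs
begin


lemma amalg_car[simp]: "bcarrier (amalg \<theta> I) = UNIV \<times> I" by (simp add: amalg_def)
lemma amalg_add[simp]: "badd (amalg \<theta> I) x y = (fst x + fst y, snd x + snd y)"
  by (cases x; cases y) (simp add: amalg_def)
lemma amalg_scale[simp]: "bscale (amalg \<theta> I) r x = (r *\<^sub>R fst x, r *\<^sub>R snd x)"
  by (cases x) (simp add: amalg_def)
lemma amalg_mul[simp]: "bmul (amalg \<theta> I) x y =
   (fst x * fst y, \<theta> (fst x) * snd y + snd x * \<theta> (fst y) + snd x * snd y)"
  by (cases x; cases y) (simp add: amalg_def)
lemma amalg_norm[simp]: "bnorm (amalg \<theta> I) x = norm (fst x) + norm (snd x)"
  by (cases x) (simp add: amalg_def)

lemma sub_car[simp]: "bcarrier (sub_balg S) = S" by (simp add: sub_balg_def)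
lemma sub_add[simp]: "badd (sub_balg S) = (+)" by (simp add: sub_balg_def)
lemma sub_scale[simp]: "bscale (sub_balg S) = scaleR" by (simp add: sub_balg_def)
lemma sub_mul[simp]: "bmul (sub_balg S) = (*)" by (simp add: sub_balg_def)
lemma sub_norm[simp]: "bnorm (sub_balg S) = norm" by (simp add: sub_balg_def)

lemma bderivationI:
  assumes add2: "\<And>a x y. a \<in> bcarrier C \<Longrightarrow> x \<in> bcarrier C \<Longrightarrow> y \<in> bcarrier C \<Longrightarrow> D a (badd C x y) = D a x + D a y"
    and sc2: "\<And>a r x. a \<in> bcarrier C \<Longrightarrow> x \<in> bcarrier C \<Longrightarrow> D a (bscale C r x) = r * D a x"
    and add1: "\<And>a a' c. a \<in> bcarrier C \<Longrightarrow> a' \<in> bcarrier C \<Longrightarrow> c \<in> bcarrier C \<Longrightarrow> D (badd C a a') c = D a c + D a' c"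
    and sc1: "\<And>r a c. a \<in> bcarrier C \<Longrightarrow> c \<in> bcarrier C \<Longrightarrow> D (bscale C r a) c = r * D a c"
    and bd: "\<And>a c. a \<in> bcarrier C \<Longrightarrow> c \<in> bcarrier C \<Longrightarrow> \<bar>D a c\<bar> \<le> K * bnorm C a * bnorm C c"
    and der: "\<And>a b c. a \<in> bcarrier C \<Longrightarrow> b \<in> bcarrier C \<Longrightarrow> c \<in> bcarrier C \<Longrightarrow>
        D (bmul C a b) c = D b (bmul C c a) + D a (bmul C b c)"
  shows "bderivation C D"
proof -
  have "dual_elem C (D a)" if "a \<in> bcarrier C" for a
    unfolding dual_elem_def using add2 sc2 bd that by blast
  then show ?thesis unfolding bderivation_def using add1 sc1 bd der by blast
qed

lemma bderD:
  assumes "bderivation C D"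
  shows "\<And>a x y. a \<in> bcarrier C \<Longrightarrow> x \<in> bcarrier C \<Longrightarrow> y \<in> bcarrier C \<Longrightarrow> D a (badd C x y) = D a x + D a y"
    and "\<And>a r x. a \<in> bcarrier C \<Longrightarrow> x \<in> bcarrier C \<Longrightarrow> D a (bscale C r x) = r * D a x"
    and "\<And>a a' c. a \<in> bcarrier C \<Longrightarrow> a' \<in> bcarrier C \<Longrightarrow> c \<in> bcarrier C \<Longrightarrow> D (badd C a a') c = D a c + D a' c"
    and "\<And>r a c. a \<in> bcarrier C \<Longrightarrow> c \<in> bcarrier C \<Longrightarrow> D (bscale C r a) c = r * D a c"
    and "\<And>a b c. a \<in> bcarrier C \<Longrightarrow> b \<in> bcarrier C \<Longrightarrow> c \<in> bcarrier C \<Longrightarrow>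
        D (bmul C a b) c = D b (bmul C c a) + D a (bmul C b c)"
  using assms unfolding bderivation_def dual_elem_def by blast+

lemma bderK:
  assumes "bderivation C D" and nn: "\<And>x. bnorm C x \<ge> 0"
  shows "\<exists>K\<ge>0. \<forall>a\<in>bcarrier C. \<forall>c\<in>bcarrier C. \<bar>D a c\<bar> \<le> K * bnorm C a * bnorm C c"
proof -
  obtain K where K: "\<forall>a\<in>bcarrier C. \<forall>c\<in>bcarrier C. \<bar>D a c\<bar> \<le> K * bnorm C a * bnorm C c"
    using assms(1) unfolding bderivation_def by blast
  have "\<bar>D a c\<bar> \<le> max K 0 * bnorm C a * bnorm C c" if "a \<in> bcarrier C" "c \<in> bcarrier C" for a c
  proof -
    have "K * (bnorm C a * bnorm C c) \<le> max K 0 * (bnorm C a * bnorm C c)"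
      by (rule mult_right_mono) (auto simp: nn)
    then show ?thesis using K that by (simp add: mult.assoc) (meson order_trans)
  qed
  then show ?thesis by (intro exI[of _ "max K 0"]) auto
qed

lemma wa_zero:
  assumes "weakly_amenable C" "balg_commutative C" "bderivation C D"
    "a \<in> bcarrier C" "c \<in> bcarrier C"
  shows "D a c = 0"
proof -
  obtain f where f: "\<forall>a\<in>bcarrier C. \<forall>c\<in>bcarrier C. D a c = f (bmul C c a) - f (bmul C a c)"
    using assms(1,3) unfolding weakly_amenable_def inner_derivation_def by blast
  then show ?thesis using assms(2,4,5) unfolding balg_commutative_def by auto
qed

lemma wa_intro:
  assumes "\<And>D a c. bderivation C D \<Longrightarrow> a \<in> bcarrier C \<Longrightarrow> c \<in> bcarrier C \<Longrightarrow> D a c = 0"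
  shows "weakly_amenable C"
proof -
  have z: "dual_elem C (\<lambda>_. 0)" unfolding dual_elem_def by (auto intro: exI[of _ 0])
  show ?thesis unfolding weakly_amenable_def inner_derivation_def
    using assms z by (intro allI impI exI[of _ "\<lambda>_. 0"]) auto
qed

lemma kill_generic:
  assumes wa: "weakly_amenable C" and cm: "balg_commutative C"
    and add: "\<And>x y. x \<in> bcarrier C \<Longrightarrow> y \<in> bcarrier C \<Longrightarrow> \<phi> (badd C x y) = \<phi> x + \<phi> y"
    and sc: "\<And>r x. x \<in> bcarrier C \<Longrightarrow> \<phi> (bscale C r x) = r * \<phi> x"
    and bd: "\<And>x. x \<in> bcarrier C \<Longrightarrow> \<bar>\<phi> x\<bar> \<le> K * bnorm C x"
    and kill: "\<And>x y. x \<in> bcarrier C \<Longrightarrow> y \<in> bcarrier C \<Longrightarrow> \<phi> (bmul C x y) = 0"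
    and x: "x \<in> bcarrier C"
  shows "\<phi> x = 0"
proof -
  have "bderivation C (\<lambda>a c. \<phi> a * \<phi> c)"
  proof (rule bderivationI[where K="K*K"])
    fix a c assume a: "a \<in> bcarrier C" and c: "c \<in> bcarrier C"
    have "\<bar>\<phi> a * \<phi> c\<bar> = \<bar>\<phi> a\<bar> * \<bar>\<phi> c\<bar>" by (rule abs_mult)
    also have "\<dots> \<le> (K * bnorm C a) * (K * bnorm C c)"
      by (rule mult_mono) (use bd[OF a] bd[OF c] in auto)
    finally show "\<bar>\<phi> a * \<phi> c\<bar> \<le> K * K * bnorm C a * bnorm C c" by (simp add: ac_simps)
  qed (auto simp: add sc kill distrib_left distrib_right)
  from wa_zero[OF wa cm this x x] have "\<phi> x * \<phi> x = 0" by simp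
  then show ?thesis by simp
qed




locale amal =
  fixes \<theta> :: "'a::{real_normed_algebra, banach} \<Rightarrow> 'b::{real_normed_algebra, banach}"
    and I :: "'b set"
  assumes bl: "bounded_linear \<theta>"
    and hom: "\<And>x y. \<theta> (x * y) = \<theta> x * \<theta> y"
    and ideal: "closed_two_sided_ideal I"
    and cm: "balg_commutative (amalg \<theta> I)"
begin

lemma th_add: "\<theta> (x + y) = \<theta> x + \<theta> y" using bl by (simp add: bounded_linear.linear linear_simps)
lemma th_scale: "\<theta> (r *\<^sub>R x) = r *\<^sub>R \<theta> x" using bl by (simp add: bounded_linear.linear linear_simps)
lemma th_zero[simp]: "\<theta> 0 = 0" using bl by (simp add: bounded_linear.linear linear_simps)

lemma I0[simp]: "0 \<in> I" using ideal unfolding closed_two_sided_ideal_def by blast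
lemma Iadd: "x \<in> I \<Longrightarrow> y \<in> I \<Longrightarrow> x + y \<in> I" using ideal unfolding closed_two_sided_ideal_def by blast
lemma Isc: "x \<in> I \<Longrightarrow> r *\<^sub>R x \<in> I" using ideal unfolding closed_two_sided_ideal_def by blast
lemma Iml: "x \<in> I \<Longrightarrow> b * x \<in> I" using ideal unfolding closed_two_sided_ideal_def by blast
lemma Imr: "x \<in> I \<Longrightarrow> x * b \<in> I" using ideal unfolding closed_two_sided_ideal_def by blast

lemma cmh: "x \<in> UNIV \<times> I \<Longrightarrow> y \<in> UNIV \<times> I \<Longrightarrow> bmul (amalg \<theta> I) x y = bmul (amalg \<theta> I) y x"
  using cm unfolding balg_commutative_def amalg_car by blast

lemma Acomm: "(a::'a) * b = b * a"
proof -
  have "bmul (amalg \<theta> I) (a,0) (b,0) = bmul (amalg \<theta> I) (b,0) (a,0)" by (rule cmh) auto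
  then show ?thesis by simp
qed

lemma Icomm: "i \<in> I \<Longrightarrow> j \<in> I \<Longrightarrow> i * j = j * i"
proof -
  assume "i \<in> I" "j \<in> I"
  then have "bmul (amalg \<theta> I) (0,i) (0,j) = bmul (amalg \<theta> I) (0,j) (0,i)" by (intro cmh) auto
  then show ?thesis by simp
qed

lemma thcomm: "j \<in> I \<Longrightarrow> \<theta> a * j = j * \<theta> a"
proof -
  assume "j \<in> I"
  then have "bmul (amalg \<theta> I) (a,0) (0,j) = bmul (amalg \<theta> I) (0,j) (a,0)" by (intro cmh) auto
  then show ?thesis by simp
qed

lemma sub_comm: "balg_commutative (sub_balg (UNIV::'a set))"
  unfolding balg_commutative_def by (simp add: Acomm)
lemma subI_comm: "balg_commutative (sub_balg I)"
  unfolding balg_commutative_def by (simp add: Icomm)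

lemma norm_C_nn: "bnorm (amalg \<theta> I) x \<ge> 0" by simp

lemma back_dir:
  assumes waA: "weakly_amenable (sub_balg (UNIV::'a set))" and waI: "weakly_amenable (sub_balg I)"
  shows "weakly_amenable (amalg \<theta> I)"
proof (rule wa_intro)
  fix D a c assume Dd: "bderivation (amalg \<theta> I) D" and a: "a \<in> bcarrier (amalg \<theta> I)"
    and c: "c \<in> bcarrier (amalg \<theta> I)"
  note d = bderD[OF Dd, simplified]
  obtain K where K0: "K \<ge> 0" and K: "\<And>a c. snd a \<in> I \<Longrightarrow> snd c \<in> I \<Longrightarrow>
      \<bar>D a c\<bar> \<le> K * (norm (fst a) + norm (snd a)) * (norm (fst c) + norm (snd c))"
    using bderK[OF Dd norm_C_nn] by auto
  have DA: "bderivation (sub_balg UNIV) (\<lambda>a a'. D (a,0) (a',0))"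
    apply (rule bderivationI[where K=K])
    subgoal for p x y using d(1)[where a="(p,0)" and x="(x,0)" and y="(y,0)"] by simp
    subgoal for p r x using d(2)[where a="(p,0)" and x="(x,0)" and r=r] by simp
    subgoal for p q z using d(3)[where a="(p,0)" and a'="(q,0)" and c="(z,0)"] by simp
    subgoal for r p z using d(4)[where a="(p,0)" and c="(z,0)" and r=r] by simp
    subgoal for p z using K[of "(p,0)" "(z,0)"] by simp
    subgoal for p q z using d(5)[where a="(p,0)" and b="(q,0)" and c="(z,0)"] by simp
    done
  have DA0: "D (p,0) (q,0) = 0" for p q
    using wa_zero[OF waA sub_comm DA, of p q] by simp
  have DI: "bderivation (sub_balg I) (\<lambda>i k. D (0,i) (0,k))"
    apply (rule bderivationI[where K=K])
    subgoal for p x y using d(1)[where a="(0,p)" and x="(0,x)" and y="(0,y)"] by simp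
    subgoal for p r x using d(2)[where a="(0,p)" and x="(0,x)" and r=r] by simp
    subgoal for p q z using d(3)[where a="(0,p)" and a'="(0,q)" and c="(0,z)"] by simp
    subgoal for r p z using d(4)[where a="(0,p)" and c="(0,z)" and r=r] by simp
    subgoal for p z using K[of "(0,p)" "(0,z)"] by simp
    subgoal for p q z using d(5)[where a="(0,p)" and b="(0,q)" and c="(0,z)"] by simp
    done
  have DI0: "D (0,p) (0,q) = 0" if "p \<in> I" "q \<in> I" for p q
    using wa_zero[OF waI subI_comm DI, of p q] that by simp
  have E0: "D (0,i) (p,0) = 0" if i: "i \<in> I" for i p
  proof (rule kill_generic[OF waI subI_comm, where \<phi>="\<lambda>i. D (0,i) (p,0)" and K="K * norm p"])
    show "i \<in> bcarrier (sub_balg I)" using i by simp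
  next
    fix x y assume "x \<in> bcarrier (sub_balg I)" "y \<in> bcarrier (sub_balg I)"
    then show "D (0, badd (sub_balg I) x y) (p, 0) = D (0, x) (p, 0) + D (0, y) (p, 0)"
      using d(3)[where a="(0,x)" and a'="(0,y)" and c="(p,0)"] by simp
  next
    fix r x assume "x \<in> bcarrier (sub_balg I)"
    then show "D (0, bscale (sub_balg I) r x) (p, 0) = r * D (0, x) (p, 0)"
      using d(4)[where a="(0,x)" and c="(p,0)" and r=r] by simp
  next
    fix x assume "x \<in> bcarrier (sub_balg I)"
    then show "\<bar>D (0, x) (p, 0)\<bar> \<le> K * norm p * bnorm (sub_balg I) x"
      using K[of "(0,x)" "(p,0)"] by (simp add: mult_ac)
  next
    fix x y assume xy: "x \<in> bcarrier (sub_balg I)" "y \<in> bcarrier (sub_balg I)"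
    then show "D (0, bmul (sub_balg I) x y) (p, 0) = 0"
      using d(5)[where a="(0,x)" and b="(0,y)" and c="(p,0)"] DI0[of y "\<theta> p * x"] DI0[of x "y * \<theta> p"]
      by (simp add: Iml Imr)
  qed
  have F0: "D (p,0) (0,i) = 0" if i: "i \<in> I" for i p
  proof (rule kill_generic[OF waI subI_comm, where \<phi>="\<lambda>i. D (p,0) (0,i)" and K="K * norm p"])
    show "i \<in> bcarrier (sub_balg I)" using i by simp
  next
    fix x y assume "x \<in> bcarrier (sub_balg I)" "y \<in> bcarrier (sub_balg I)"
    then show "D (p,0) (0, badd (sub_balg I) x y) = D (p,0) (0, x) + D (p,0) (0, y)"
      using d(1)[where a="(p,0)" and x="(0,x)" and y="(0,y)"] by simp
  next
    fix r x assume "x \<in> bcarrier (sub_balg I)"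
    then show "D (p,0) (0, bscale (sub_balg I) r x) = r * D (p,0) (0, x)"
      using d(2)[where a="(p,0)" and x="(0,x)" and r=r] by simp
  next
    fix x assume "x \<in> bcarrier (sub_balg I)"
    then show "\<bar>D (p,0) (0, x)\<bar> \<le> K * norm p * bnorm (sub_balg I) x"
      using K[of "(p,0)" "(0,x)"] by (simp add: mult_ac)
  next
    fix x y assume xy: "x \<in> bcarrier (sub_balg I)" "y \<in> bcarrier (sub_balg I)"
    then show "D (p,0) (0, bmul (sub_balg I) x y) = 0"
      using d(5)[where a="(p,0)" and b="(0,x)" and c="(0,y)"] DI0[of "\<theta> p * x" y] DI0[of x "y * \<theta> p"]
      by (simp add: Iml Imr)
  qed
  obtain a1 a2 where ae: "a = (a1,a2)" by (cases a)
  obtain c1 c2 where ce: "c = (c1,c2)" by (cases c)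
  have a2: "a2 \<in> I" and c2: "c2 \<in> I" using a c ae ce by auto
  have "D (a1,a2) (c1,c2) = D (a1,0) (c1,c2) + D (0,a2) (c1,c2)"
    using d(3)[where a="(a1,0)" and a'="(0,a2)" and c="(c1,c2)"] a2 c2 by simp
  also have "D (a1,0) (c1,c2) = D (a1,0) (c1,0) + D (a1,0) (0,c2)"
    using d(1)[where a="(a1,0)" and x="(c1,0)" and y="(0,c2)"] a2 c2 by simp
  also have "D (0,a2) (c1,c2) = D (0,a2) (c1,0) + D (0,a2) (0,c2)"
    using d(1)[where a="(0,a2)" and x="(c1,0)" and y="(0,c2)"] a2 c2 by simp
  finally show "D a c = 0" using ae ce DA0 E0[OF a2] F0[OF c2] DI0[OF a2 c2] by simp
qed

lemma fwdA:
  assumes wa: "weakly_amenable (amalg \<theta> I)"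
  shows "weakly_amenable (sub_balg (UNIV::'a set))"
proof (rule wa_intro)
  fix D a c assume Dd: "bderivation (sub_balg (UNIV::'a set)) D"
  note d = bderD[OF Dd, simplified]
  obtain K where K0: "K \<ge> 0" and K: "\<And>a c. \<bar>D a c\<bar> \<le> K * norm a * norm c"
    using bderK[OF Dd] by auto
  have DD: "bderivation (amalg \<theta> I) (\<lambda>x y. D (fst x) (fst y))"
  proof (rule bderivationI[where K=K])
    fix x y assume "x \<in> bcarrier (amalg \<theta> I)" "y \<in> bcarrier (amalg \<theta> I)"
    have "\<bar>D (fst x) (fst y)\<bar> \<le> K * norm (fst x) * norm (fst y)" by (rule K)
    also have "\<dots> \<le> K * bnorm (amalg \<theta> I) x * bnorm (amalg \<theta> I) y"
      using K0 by (simp add: mult_mono)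
    finally show "\<bar>D (fst x) (fst y)\<bar> \<le> K * bnorm (amalg \<theta> I) x * bnorm (amalg \<theta> I) y" .
  qed (auto simp: d)
  have "D (fst (a,0::'b)) (fst (c,0::'b)) = 0"
    by (rule wa_zero[OF wa cm DD]) auto
  then show "D a c = 0" by simp
qed


lemma thB: "\<exists>B\<ge>0. \<forall>x. norm (\<theta> x) \<le> norm x * B"
  using bounded_linear.pos_bounded[OF bl] by (auto intro: less_imp_le)

lemma killI:
  assumes wa: "weakly_amenable (amalg \<theta> I)"
    and add: "\<And>x y. x \<in> I \<Longrightarrow> y \<in> I \<Longrightarrow> \<phi> (x + y) = \<phi> x + \<phi> y"
    and sc: "\<And>r x. x \<in> I \<Longrightarrow> \<phi> (r *\<^sub>R x) = r * \<phi> x"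
    and bd: "\<And>x. x \<in> I \<Longrightarrow> \<bar>\<phi> x\<bar> \<le> K * norm x"
    and K0: "K \<ge> 0"
    and kill: "\<And>x y. x \<in> I \<Longrightarrow> y \<in> I \<Longrightarrow> \<phi> (x * y) = 0"
    and m: "m \<in> I"
  shows "\<phi> m = 0"
proof -
  obtain B where B0: "B \<ge> 0" and B: "\<And>x. norm (\<theta> x) \<le> norm x * B" using thB by auto
  have D1: "bderivation (amalg \<theta> I) (\<lambda>x c. \<phi> (\<theta> (fst c) * snd x))"
  proof (rule bderivationI[where K="K*B"])
    fix a x y assume "a \<in> bcarrier (amalg \<theta> I)" "x \<in> bcarrier (amalg \<theta> I)" "y \<in> bcarrier (amalg \<theta> I)"
    then show "\<phi> (\<theta> (fst (badd (amalg \<theta> I) x y)) * snd a) = \<phi> (\<theta> (fst x) * snd a) + \<phi> (\<theta> (fst y) * snd a)"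
      by (auto simp: th_add distrib_right add Iml)
  next
    fix a r x assume "a \<in> bcarrier (amalg \<theta> I)" "x \<in> bcarrier (amalg \<theta> I)"
    then show "\<phi> (\<theta> (fst (bscale (amalg \<theta> I) r x)) * snd a) = r * \<phi> (\<theta> (fst x) * snd a)"
      by (auto simp: th_scale sc Iml)
  next
    fix a a' c assume "a \<in> bcarrier (amalg \<theta> I)" "a' \<in> bcarrier (amalg \<theta> I)" "c \<in> bcarrier (amalg \<theta> I)"
    then show "\<phi> (\<theta> (fst c) * snd (badd (amalg \<theta> I) a a')) = \<phi> (\<theta> (fst c) * snd a) + \<phi> (\<theta> (fst c) * snd a')"
      by (auto simp: distrib_left add Iml)
  next
    fix r a c assume "a \<in> bcarrier (amalg \<theta> I)" "c \<in> bcarrier (amalg \<theta> I)"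
    then show "\<phi> (\<theta> (fst c) * snd (bscale (amalg \<theta> I) r a)) = r * \<phi> (\<theta> (fst c) * snd a)"
      by (auto simp: sc Iml)
  next
    fix a c assume a: "a \<in> bcarrier (amalg \<theta> I)" and c: "c \<in> bcarrier (amalg \<theta> I)"
    have "\<bar>\<phi> (\<theta> (fst c) * snd a)\<bar> \<le> K * norm (\<theta> (fst c) * snd a)"
      using a by (intro bd Iml) auto
    also have "\<dots> \<le> K * (norm (fst c) * B * norm (snd a))"
      by (intro mult_left_mono K0 order_trans[OF norm_mult_ineq] mult_right_mono B) auto
    also have "\<dots> \<le> K * (bnorm (amalg \<theta> I) c * B * bnorm (amalg \<theta> I) a)"
      by (intro mult_left_mono K0 mult_mono B0) (auto simp: B0)
    finally show "\<bar>\<phi> (\<theta> (fst c) * snd a)\<bar> \<le> K * B * bnorm (amalg \<theta> I) a * bnorm (amalg \<theta> I) c"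
      by (simp add: mult_ac)
  next
    fix a b c assume a: "a \<in> bcarrier (amalg \<theta> I)" and b: "b \<in> bcarrier (amalg \<theta> I)" and c: "c \<in> bcarrier (amalg \<theta> I)"
    obtain a1 a2 where ae: "a = (a1,a2)" by (cases a)
    obtain b1 b2 where be: "b = (b1,b2)" by (cases b)
    obtain c1 c2 where ce: "c = (c1,c2)" by (cases c)
    have a2: "a2 \<in> I" and b2: "b2 \<in> I" using a b ae be by auto
    have e1: "\<theta> c1 * (\<theta> a1 * b2 + a2 * \<theta> b1 + a2 * b2) = \<theta> (c1 * a1) * b2 + \<theta> (b1 * c1) * a2 + (\<theta> c1 * a2) * b2"
      using thcomm[OF a2, of b1] by (simp add: hom distrib_left mult.assoc Acomm[of b1 c1])
    have "\<phi> ((\<theta> c1 * a2) * b2) = 0" using a2 b2 by (intro kill Iml)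
    then show "\<phi> (\<theta> (fst c) * snd (bmul (amalg \<theta> I) a b)) =
        \<phi> (\<theta> (fst (bmul (amalg \<theta> I) c a)) * snd b) + \<phi> (\<theta> (fst (bmul (amalg \<theta> I) b c)) * snd a)"
      using a2 b2 ae be ce by (simp add: e1 add Iml Imr Iadd)
  qed
  have z1: "\<phi> (\<theta> p * i) = 0" if "i \<in> I" for p i
    using wa_zero[OF wa cm D1, of "(0,i)" "(p,0)"] that by simp
  have "\<phi> (snd (0::'a, m)) = 0"
  proof (rule kill_generic[OF wa cm, where \<phi>="\<lambda>x. \<phi> (snd x)" and K=K])
    fix x assume "x \<in> bcarrier (amalg \<theta> I)"
    then have "\<bar>\<phi> (snd x)\<bar> \<le> K * norm (snd x)" by (auto intro: bd)
    also have "\<dots> \<le> K * bnorm (amalg \<theta> I) x" using K0 by (simp add: mult_left_mono)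
    finally show "\<bar>\<phi> (snd x)\<bar> \<le> K * bnorm (amalg \<theta> I) x" .
  next
    fix x y assume x: "x \<in> bcarrier (amalg \<theta> I)" and y: "y \<in> bcarrier (amalg \<theta> I)"
    then have "snd x \<in> I" "snd y \<in> I" by auto
    then show "\<phi> (snd (bmul (amalg \<theta> I) x y)) = 0"
      using z1[of "snd y" "fst x"] z1[of "snd x" "fst y"] kill[of "snd x" "snd y"] thcomm[of "snd x" "fst y"]
      by (simp add: add Iml Imr Iadd)
  qed (use m in \<open>auto simp: add sc\<close>)
  then show ?thesis by simp
qed

end


definition act :: "('a::real_normed_algebra \<Rightarrow> 'b::real_normed_algebra) \<Rightarrow> 'a \<times> 'b \<Rightarrow> 'b \<Rightarrow> 'b" where
  "act \<theta> x m = \<theta> (fst x) * m + snd x * m"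

lemma abs_D_le:
  fixes d :: real
  assumes "\<bar>d\<bar> \<le> K * a * b" "K \<ge> 0" "0 \<le> a" "a \<le> P" "0 \<le> b" "b \<le> Q"
  shows "\<bar>d\<bar> \<le> K * P * Q"
proof -
  have "K * a \<le> K * P" using assms by (simp add: mult_left_mono)
  moreover have "0 \<le> K * P" using assms by simp
  ultimately have "K * a * b \<le> K * P * Q"
    using assms by (intro mult_mono) auto
  then show ?thesis using assms(1) by linarith
qed

context amal begin

lemma actI: "m \<in> I \<Longrightarrow> act \<theta> x m \<in> I" by (simp add: act_def Iadd Iml)
lemma act_add_m: "act \<theta> x (m + m') = act \<theta> x m + act \<theta> x m'" by (simp add: act_def algebra_simps)
lemma act_sc_m: "act \<theta> x (r *\<^sub>R m) = r *\<^sub>R act \<theta> x m" by (simp add: act_def scaleR_right_distrib)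
lemma act_add_x: "act \<theta> (badd (amalg \<theta> I) x y) m = act \<theta> x m + act \<theta> y m"
  by (simp add: act_def th_add algebra_simps)
lemma act_sc_x: "act \<theta> (bscale (amalg \<theta> I) r x) m = r *\<^sub>R act \<theta> x m"
  by (simp add: act_def th_scale scaleR_right_distrib)
lemma act_add_x': "act \<theta> (fst x + fst y, snd x + snd y) m = act \<theta> x m + act \<theta> y m"
  using act_add_x by simp
lemma act_sc_x': "act \<theta> (r *\<^sub>R fst x, r *\<^sub>R snd x) m = r *\<^sub>R act \<theta> x m"
  using act_sc_x by simp
lemma act_mul: "act \<theta> (bmul (amalg \<theta> I) x y) m = act \<theta> x (act \<theta> y m)"
  by (simp add: act_def hom algebra_simps)
lemma act_swap: "snd x \<in> I \<Longrightarrow> snd y \<in> I \<Longrightarrow> act \<theta> x (act \<theta> y m) = act \<theta> y (act \<theta> x m)"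
  using cmh[of x y] by (metis act_mul mem_Times_iff UNIV_I)
lemma act_rmul: "act \<theta> x (p * q) = act \<theta> x p * q" by (simp add: act_def algebra_simps)
lemma act_sw2: "j \<in> I \<Longrightarrow> k \<in> I \<Longrightarrow> act \<theta> x j * k = act \<theta> x k * j"
proof -
  assume "j \<in> I" "k \<in> I"
  then have "j * k = k * j" by (rule Icomm)
  then show ?thesis by (simp add: act_def algebra_simps)
qed
lemma act_lmul: "p \<in> I \<Longrightarrow> n \<in> I \<Longrightarrow> snd y \<in> I \<Longrightarrow> p * act \<theta> y n = act \<theta> y (p * n)"
proof -
  assume "p \<in> I" "n \<in> I" "snd y \<in> I"
  then have "p * snd y = snd y * p" "p * \<theta> (fst y) = \<theta> (fst y) * p"
    using Icomm thcomm by auto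
  then show ?thesis by (simp add: act_def distrib_left mult.assoc[symmetric])
qed
lemma act0[simp]: "act \<theta> (0, i) m = i * m" by (simp add: act_def)

lemma actn:
  assumes B0: "B \<ge> 0" and B: "\<And>x. norm (\<theta> x) \<le> norm x * B"
  shows "norm (act \<theta> x m) \<le> (B + 1) * (norm (fst x) + norm (snd x)) * norm m"
proof -
  have "norm (act \<theta> x m) \<le> norm (\<theta> (fst x) * m) + norm (snd x * m)"
    unfolding act_def by (rule norm_triangle_ineq)
  also have "\<dots> \<le> norm (\<theta> (fst x)) * norm m + norm (snd x) * norm m"
    by (intro add_mono norm_mult_ineq)
  also have "\<dots> \<le> (norm (fst x) * B) * norm m + norm (snd x) * norm m"
    by (intro add_mono mult_right_mono B) auto
  also have "\<dots> \<le> (B + 1) * (norm (fst x) + norm (snd x)) * norm m"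
  proof -
    have "norm (fst x) * B + norm (snd x) \<le> (B + 1) * (norm (fst x) + norm (snd x))"
      using B0 by (simp add: algebra_simps)
    then show ?thesis by (metis distrib_right mult_right_mono norm_ge_zero)
  qed
  finally show ?thesis .
qed


lemma fwdI:
  assumes wa: "weakly_amenable (amalg \<theta> I)"
  shows "weakly_amenable (sub_balg I)"
proof (rule wa_intro)
  fix D i0 k0 assume Dd: "bderivation (sub_balg I) D" and i0': "i0 \<in> bcarrier (sub_balg I)"
    and k0': "k0 \<in> bcarrier (sub_balg I)"
  have i0: "i0 \<in> I" and k0: "k0 \<in> I" using i0' k0' by auto
  note d = bderD[OF Dd, simplified]
  obtain K where K0: "K \<ge> 0" and K: "\<And>p q. p \<in> I \<Longrightarrow> q \<in> I \<Longrightarrow> \<bar>D p q\<bar> \<le> K * norm p * norm q"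
    using bderK[OF Dd] by auto
  obtain B where B0: "B \<ge> 0" and B: "\<And>x. norm (\<theta> x) \<le> norm x * B" using thB by auto
  note an = actn[OF B0 B]
  define T where "T x j m = D (act \<theta> x j) m - D j (act \<theta> x m)" for x j m
  have TL: "T x j (k * m) = T x k (j * m)" if j: "j \<in> I" and k: "k \<in> I" and m: "m \<in> I" for x j k m
  proof -
    have aj: "act \<theta> x j \<in> I" and ak: "act \<theta> x k \<in> I" using actI j k by auto
    have e1: "D (act \<theta> x j * k) m = D k (m * act \<theta> x j) + D (act \<theta> x j) (k * m)"
      using d(5)[where a="act \<theta> x j" and b=k and c=m] aj k m by simp
    have e2: "D (act \<theta> x k * j) m = D j (m * act \<theta> x k) + D (act \<theta> x k) (j * m)"
      using d(5)[where a="act \<theta> x k" and b=j and c=m] ak j m by simp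
    have s: "act \<theta> x j * k = act \<theta> x k * j" using act_sw2 j k by blast
    have r1: "act \<theta> x (k * m) = m * act \<theta> x k" using act_rmul Icomm[OF ak m] by simp
    have r2: "act \<theta> x (j * m) = m * act \<theta> x j" using act_rmul Icomm[OF aj m] by simp
    show ?thesis unfolding T_def r1 r2 using e1 e2 s by simp
  qed
  have R: "D (act \<theta> x (act \<theta> y u)) m - D (act \<theta> y u) (act \<theta> x m) - D (act \<theta> x u) (act \<theta> y m)
      + D u (act \<theta> x (act \<theta> y m)) = 0"
    if x: "snd x \<in> I" and y: "snd y \<in> I" and u: "u \<in> I" and m: "m \<in> I" for x y u m
  proof -
    define \<phi> where "\<phi> m = D (act \<theta> x (act \<theta> y u)) m - D (act \<theta> y u) (act \<theta> x m) - D (act \<theta> x u) (act \<theta> y m)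
      + D u (act \<theta> x (act \<theta> y m))" for m
    define Mx where "Mx = (B + 1) * (norm (fst x) + norm (snd x))"
    define My where "My = (B + 1) * (norm (fst y) + norm (snd y))"
    have Mx0: "Mx \<ge> 0" and My0: "My \<ge> 0" using B0 by (auto simp: Mx_def My_def)
    define KR where "KR = K * norm (act \<theta> x (act \<theta> y u)) + K * norm (act \<theta> y u) * Mx
       + K * norm (act \<theta> x u) * My + K * norm u * (Mx * My)"
    have "\<phi> m = 0"
    proof (rule killI[OF wa, where \<phi>=\<phi> and K=KR])
      fix a b assume "a \<in> I" "b \<in> I"
      then show "\<phi> (a + b) = \<phi> a + \<phi> b"
        by (simp add: \<phi>_def act_add_m d(1) actI u Iadd)
    next
      fix r a assume "a \<in> I"
      then show "\<phi> (r *\<^sub>R a) = r * \<phi> a"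
        by (simp add: \<phi>_def act_sc_m d(2) actI u algebra_simps)
    next
      fix a assume a: "a \<in> I"
      have h1: "\<bar>D (act \<theta> x (act \<theta> y u)) a\<bar> \<le> K * norm (act \<theta> x (act \<theta> y u)) * norm a"
        using K actI u a by blast
      have h2: "\<bar>D (act \<theta> y u) (act \<theta> x a)\<bar> \<le> K * norm (act \<theta> y u) * (Mx * norm a)"
        by (rule abs_D_le[OF K[OF actI[OF u, of y] actI[OF a, of x]] K0 norm_ge_zero order_refl[of "norm (act \<theta> y u)"] norm_ge_zero]) (simp add: Mx_def an)
      have h3: "\<bar>D (act \<theta> x u) (act \<theta> y a)\<bar> \<le> K * norm (act \<theta> x u) * (My * norm a)"
        by (rule abs_D_le[OF K[OF actI[OF u, of x] actI[OF a, of y]] K0 norm_ge_zero order_refl[of "norm (act \<theta> x u)"] norm_ge_zero]) (simp add: My_def an)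
      have nn: "norm (act \<theta> x (act \<theta> y a)) \<le> Mx * (My * norm a)"
      proof -
        have n1: "norm (act \<theta> x (act \<theta> y a)) \<le> Mx * norm (act \<theta> y a)" using an[of x "act \<theta> y a"] by (simp add: Mx_def)
        have n2: "norm (act \<theta> y a) \<le> My * norm a" using an[of y a] by (simp add: My_def)
        show ?thesis using order_trans[OF n1 mult_left_mono[OF n2 Mx0]] .
      qed
      have h4: "\<bar>D u (act \<theta> x (act \<theta> y a))\<bar> \<le> K * norm u * (Mx * (My * norm a))"
        by (rule abs_D_le[OF K[OF u actI[OF actI[OF a, of y], of x]] K0 norm_ge_zero order_refl[of "norm u"] norm_ge_zero nn])
      have eq: "KR * norm a = K * norm (act \<theta> x (act \<theta> y u)) * norm a + K * norm (act \<theta> y u) * (Mx * norm a)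
         + K * norm (act \<theta> x u) * (My * norm a) + K * norm u * (Mx * (My * norm a))"
        by (simp add: KR_def algebra_simps)
      show "\<bar>\<phi> a\<bar> \<le> KR * norm a" unfolding \<phi>_def eq using h1 h2 h3 h4 by linarith
    next
      show "KR \<ge> 0" unfolding KR_def using K0 Mx0 My0 by (intro add_nonneg_nonneg mult_nonneg_nonneg) auto
    next
      fix k n assume k: "k \<in> I" and n: "n \<in> I"
      have ayu: "act \<theta> y u \<in> I" and ayn: "act \<theta> y n \<in> I" using actI u n by auto
      have "\<phi> (k * n) = T x (act \<theta> y u) (k * n) - T x u (act \<theta> y (k * n))"
        by (simp add: \<phi>_def T_def)
      also have "T x (act \<theta> y u) (k * n) = T x k (act \<theta> y u * n)" by (rule TL[OF ayu k n])
      also have "act \<theta> y u * n = u * act \<theta> y n"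
        using act_sw2[OF u n, of y] Icomm[OF ayn u] by simp
      also have "T x k (u * act \<theta> y n) = T x u (k * act \<theta> y n)" by (rule TL[OF k u ayn])
      also have "k * act \<theta> y n = act \<theta> y (k * n)" by (rule act_lmul[OF k n y])
      finally show "\<phi> (k * n) = 0" by simp
    qed (use m in auto)
    then show ?thesis by (simp add: \<phi>_def)
  qed
  have trip: "D i (u * (k * w)) = 0" if i: "i \<in> I" and u: "u \<in> I" and k: "k \<in> I" and w: "w \<in> I" for i u k w
  proof -
    define \<Delta> where "\<Delta> x c = D (act \<theta> x u) (act \<theta> c w) - D u (act \<theta> x (act \<theta> c w))" for x c
    have "bderivation (amalg \<theta> I) \<Delta>"
    proof (rule bderivationI[where K="2 * (K * (B + 1) * (B + 1) * norm u * norm w)"])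
      fix a x y assume "a \<in> bcarrier (amalg \<theta> I)" "x \<in> bcarrier (amalg \<theta> I)" "y \<in> bcarrier (amalg \<theta> I)"
      then show "\<Delta> a (badd (amalg \<theta> I) x y) = \<Delta> a x + \<Delta> a y"
        by (simp add: \<Delta>_def act_add_x' act_add_m d(1) actI u w)
    next
      fix a r x assume "a \<in> bcarrier (amalg \<theta> I)" "x \<in> bcarrier (amalg \<theta> I)"
      then show "\<Delta> a (bscale (amalg \<theta> I) r x) = r * \<Delta> a x"
        by (simp add: \<Delta>_def act_sc_x' act_sc_m d(2) actI u w algebra_simps)
    next
      fix a a' c assume "a \<in> bcarrier (amalg \<theta> I)" "a' \<in> bcarrier (amalg \<theta> I)" "c \<in> bcarrier (amalg \<theta> I)"
      then show "\<Delta> (badd (amalg \<theta> I) a a') c = \<Delta> a c + \<Delta> a' c"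
        by (simp add: \<Delta>_def act_add_x' act_add_m d(1) d(3) actI u w)
    next
      fix r a c assume "a \<in> bcarrier (amalg \<theta> I)" "c \<in> bcarrier (amalg \<theta> I)"
      then show "\<Delta> (bscale (amalg \<theta> I) r a) c = r * \<Delta> a c"
        by (simp add: \<Delta>_def act_sc_x' act_sc_m d(2) d(4) actI u w algebra_simps)
    next
      fix a c assume a: "a \<in> bcarrier (amalg \<theta> I)" and c: "c \<in> bcarrier (amalg \<theta> I)"
      define Ma where "Ma = (B + 1) * (norm (fst a) + norm (snd a))"
      define Mc where "Mc = (B + 1) * (norm (fst c) + norm (snd c))"
      have Ma0: "Ma \<ge> 0" and Mc0: "Mc \<ge> 0" using B0 by (auto simp: Ma_def Mc_def)
      have h1: "\<bar>D (act \<theta> a u) (act \<theta> c w)\<bar> \<le> K * (Ma * norm u) * (Mc * norm w)"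
        by (rule abs_D_le[OF K[OF actI[OF u, of a] actI[OF w, of c]] K0 norm_ge_zero _ norm_ge_zero]) (simp_all add: Ma_def Mc_def an)
      have nn: "norm (act \<theta> a (act \<theta> c w)) \<le> Ma * (Mc * norm w)"
      proof -
        have n1: "norm (act \<theta> a (act \<theta> c w)) \<le> Ma * norm (act \<theta> c w)" using an[of a "act \<theta> c w"] by (simp add: Ma_def)
        have n2: "norm (act \<theta> c w) \<le> Mc * norm w" using an[of c w] by (simp add: Mc_def)
        show ?thesis using order_trans[OF n1 mult_left_mono[OF n2 Ma0]] .
      qed
      have h2: "\<bar>D u (act \<theta> a (act \<theta> c w))\<bar> \<le> K * norm u * (Ma * (Mc * norm w))"
        by (rule abs_D_le[OF K[OF u actI[OF actI[OF w, of c], of a]] K0 norm_ge_zero order_refl[of "norm u"] norm_ge_zero nn])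
      have eq: "2 * (K * (B + 1) * (B + 1) * norm u * norm w) * bnorm (amalg \<theta> I) a * bnorm (amalg \<theta> I) c
          = K * (Ma * norm u) * (Mc * norm w) + K * norm u * (Ma * (Mc * norm w))"
        by (simp add: Ma_def Mc_def algebra_simps)
      show "\<bar>\<Delta> a c\<bar> \<le> 2 * (K * (B + 1) * (B + 1) * norm u * norm w) * bnorm (amalg \<theta> I) a * bnorm (amalg \<theta> I) c"
        unfolding eq \<Delta>_def using h1 h2 by linarith
    next
      fix a b c assume a: "a \<in> bcarrier (amalg \<theta> I)" and b: "b \<in> bcarrier (amalg \<theta> I)" and c: "c \<in> bcarrier (amalg \<theta> I)"
      have sa: "snd a \<in> I" and sb: "snd b \<in> I" and sc: "snd c \<in> I" using a b c by auto
      have eq1: "act \<theta> c (act \<theta> a w) = act \<theta> a (act \<theta> c w)" by (rule act_swap[OF sc sa])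
      have eq2: "act \<theta> b (act \<theta> a (act \<theta> c w)) = act \<theta> a (act \<theta> b (act \<theta> c w))" by (rule act_swap[OF sb sa])
      have RR: "D (act \<theta> a (act \<theta> b u)) (act \<theta> c w) - D (act \<theta> b u) (act \<theta> a (act \<theta> c w))
          - D (act \<theta> a u) (act \<theta> b (act \<theta> c w)) + D u (act \<theta> a (act \<theta> b (act \<theta> c w))) = 0"
        by (rule R[OF sa sb u actI[OF w, of c]])
      show "\<Delta> (bmul (amalg \<theta> I) a b) c = \<Delta> b (bmul (amalg \<theta> I) c a) + \<Delta> a (bmul (amalg \<theta> I) b c)"
        unfolding \<Delta>_def act_mul eq1 eq2 using RR by linarith
    qed
    from wa_zero[OF wa cm this, of "(0,i)" "(0,k)"] i k
    have z: "D (i * u) (k * w) - D u (i * (k * w)) = 0" by (simp add: \<Delta>_def)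
    have "D (i * u) (k * w) = D u ((k * w) * i) + D i (u * (k * w))"
      using d(5)[where a=i and b=u and c="k*w"] i u k w by (simp add: Iml)
    moreover have "(k * w) * i = i * (k * w)" using Icomm[OF Iml[OF w, of k] i] .
    ultimately show ?thesis using z by simp
  qed
  have s1: "D i0 (u * m) = 0" if u: "u \<in> I" and m: "m \<in> I" for u m
  proof (rule killI[OF wa, where \<phi>="\<lambda>m. D i0 (u * m)" and K="K * norm i0 * norm u"])
    show "m \<in> I" by (rule m)
  next
    fix x y assume "x \<in> I" "y \<in> I"
    then show "D i0 (u * (x + y)) = D i0 (u * x) + D i0 (u * y)"
      by (simp add: distrib_left d(1) i0 Iml)
  next
    fix r x assume "x \<in> I"
    then show "D i0 (u * (r *\<^sub>R x)) = r * D i0 (u * x)" by (simp add: d(2) i0 Iml)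
  next
    fix x assume x: "x \<in> I"
    show "\<bar>D i0 (u * x)\<bar> \<le> K * norm i0 * norm u * norm x"
      using abs_D_le[OF K[OF i0 Iml[OF x]] K0 norm_ge_zero order_refl[of "norm i0"] norm_ge_zero norm_mult_ineq] by (simp add: mult.assoc)
  next
    show "0 \<le> K * norm i0 * norm u" using K0 by simp
  next
    fix x y assume "x \<in> I" "y \<in> I"
    then show "D i0 (u * (x * y)) = 0" by (rule trip[OF i0 u])
  qed
  show "D i0 k0 = 0"
  proof (rule killI[OF wa, where \<phi>="D i0" and K="K * norm i0"])
    show "k0 \<in> I" by (rule k0)
  qed (auto simp: d(1) d(2) i0 K0 s1 intro: K)
qed

end

theorem theorem6p1:
  fixes \<theta> :: "'a::{real_normed_algebra, banach} \<Rightarrow> 'b::{real_normed_algebra, banach}"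
    and I :: "'b set"
  assumes "bounded_linear \<theta>"
    and "\<And>x y. \<theta> (x * y) = \<theta> x * \<theta> y"
    and "onorm \<theta> \<le> 1"
    and "closed_two_sided_ideal I"
    and "balg_commutative (amalg \<theta> I)"
  shows "weakly_amenable (amalg \<theta> I) \<longleftrightarrow>
         weakly_amenable (sub_balg (UNIV :: 'a set)) \<and> weakly_amenable (sub_balg I)"
proof -
  interpret amal \<theta> I unfolding amal_def using assms(1,2,4,5) by blast
  show ?thesis using back_dir fwdA fwdI by blast
qed

end
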